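(* Let $\Gamma\subseteq\mathbf{\Phi}^{\mathbb{R}}_D$ be a weighted relational clone. Then $\mathrm{supp}(\mathrm{wPol}_{\mathbb{R}}(\Gamma))=\mathrm{Pol}(\Gamma)$.
   Context: $D$ is a fixed finite set with $|D|\ge2$; $\overline{\mathbb{R}}=\mathbb{R}\cup\{\infty\}$. An $m$-ary weighted relation is $\gamma:D^m\to\overline{\mathbb{R}}$; $\mathbf{\Phi}^{\mathbb{R}}_D$ is the set of all of them; $\mathrm{Feas}(\gamma)=\{\mathbf{x}:\gamma(\mathbf{x})<\infty\}$; $\mathrm{Opt}(\gamma)$ is the relation that is $0$ on $\{\mathbf{x}\in\mathrm{Feas}(\gamma):\gamma(\mathbf{x})\le\gamma(\mathbf{y})\ \forall\mathbf{y}\}$ and $\infty$ elsewhere. Topology: for each $m$ and $F\subseteq D^m$, the $m$-ary $\gamma$ with $\mathrm{Feas}(\gamma)=F$ are identified with $\mathbb{R}^F$ (Euclidean topology), and $\mathbf{\Phi}^{\mathbb{R}}_D$ has the disjoint union topology. $\phi_=$: binary equality ($0$ if $x=y$, else $\infty$); $\phi_\emptyset$: unary, $\infty$ everywhere. Addition: $\gamma(x_1,\dots,x_r)=\gamma_1(y_1,\dots,y_s)+\gamma_2(z_1,\dots,z_t)$ for a fixed choice of $y_i,z_j$ among the $x$'s; minimisation: $\gamma(x_1,\dots,x_r)=\min_{\mathbf{y}\in D^s}\gamma'(x_1,\dots,x_r,\mathbf{y})$. A weighted relational clone is a set $\Gamma\subseteq\mathbf{\Phi}^{\mathbb{R}}_D$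 containing $\phi_=,\phi_\emptyset$, closed under addition, minimisation, scaling by non-negative reals ($0\cdot\infty=\infty$), addition of real constants and $\mathrm{Opt}$, and topologically closed. A $k$-ary operation is $f:D^k\to D$, applied coordinatewise; $\mathbf{O}^{(k)}_D$ the set of them. $f$ is a polymorphism of $\gamma$ if $f(\mathbf{x}_1,\dots,\mathbf{x}_k)\in\mathrm{Feas}(\gamma)$ whenever all $\mathbf{x}_i\in\mathrm{Feas}(\gamma)$; $\mathrm{Pol}(\Gamma)$ is the set of common polymorphisms. $\mathbf{J}_D$ is the set of projections $e^{(k)}_i(x_1,\dots,x_k)=x_i$. A $k$-ary weighting is $\omega:\mathbf{O}^{(k)}_D\to\mathbb{R}$ with $\sum_f\omega(f)=0$ and $\omega(f)<0$ only if $f$ is a projection; $\mathrm{supp}(\omega)=\mathbf{J}_D^{(k)}\cup\{f:\omega(f)>0\}$; for a set $\Omega$ of weightings, $\mathrm{supp}(\Omega)=\mathbf{J}_D\cup\bigcup_{\omega\in\Omega}\mathrm{supp}(\omega)$. $\omega$ is a weighted polymorphism of $\gamma$ if $\mathrm{supp}(\omega)\subseteq\mathrm{Pol}(\gamma)$ and for all $\mathbf{x}_1,\dots,\mathbf{x}_k\in\mathrm{Feas}(\gamma)$, $\sum_{f\in\mathrm{supp}(\omega)}\omega(f)\gamma(f(\mathbf{x}_1,\dots,\mathbf{x}_k))\le0$; $\mathrm{wPol}_{\mathbb{R}}(\Gamma)$ is the set of weightings that are weighted polymorphisms of all $\gamma\in\Gamma$. *)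

theory Defs
  imports "HOL-Analysis.Analysis"
begin

text \<open>The finite domain D is a type 'd of class finite (with CARD('d) \<ge> 2 assumed in
the theorem). Tuples in D^m are lists of length m. Extended reals R \<union> {\<infinity>} are
represented inside ereal, with the value -\<infinity> excluded.\<close>

text \<open>An m-ary weighted relation: a pair (m, g); g is only meaningful on lists of
length m and is canonically \<infinity> elsewhere.\<close>
type_synonym 'd wrel = "nat \<times> ('d list \<Rightarrow> ereal)"

definition Phi :: "'d wrel set" where
  "Phi = {(m, g). (\<forall>x. g x \<noteq> -\<infinity>) \<and> (\<forall>x. length x \<noteq> m \<longrightarrow> g x = \<infinity>)}"

definition Feas :: "'d wrel \<Rightarrow> 'd list set" where
  "Feas \<gamma> = {x. length x = fst \<gamma> \<and> snd \<gamma> x < \<infinity>}"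

definition Opt :: "'d wrel \<Rightarrow> 'd wrel" where
  "Opt \<gamma> = (fst \<gamma>, \<lambda>x. if x \<in> Feas \<gamma> \<and> (\<forall>y. length y = fst \<gamma> \<longrightarrow> snd \<gamma> x \<le> snd \<gamma> y)
                        then 0 else \<infinity>)"

definition phi_eq :: "'d wrel" where
  "phi_eq = (2, \<lambda>x. if length x = 2 \<and> x ! 0 = x ! 1 then 0 else \<infinity>)"

definition phi_empty :: "'d wrel" where
  "phi_empty = (1, \<lambda>x. \<infinity>)"

definition wadd :: "nat \<Rightarrow> (nat \<Rightarrow> nat) \<Rightarrow> (nat \<Rightarrow> nat) \<Rightarrow> 'd wrel \<Rightarrow> 'd wrel \<Rightarrow> 'd wrel" where
  "wadd r \<sigma> \<tau> \<gamma>1 \<gamma>2 = (r, \<lambda>x. if length x = r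
       then snd \<gamma>1 (map (\<lambda>i. x ! \<sigma> i) [0..<fst \<gamma>1]) + snd \<gamma>2 (map (\<lambda>j. x ! \<tau> j) [0..<fst \<gamma>2])
       else \<infinity>)"

definition wmin :: "nat \<Rightarrow> nat \<Rightarrow> 'd wrel \<Rightarrow> 'd wrel" where
  "wmin r s \<gamma> = (r, \<lambda>x. if length x = r
       then Min ((\<lambda>y. snd \<gamma> (x @ y)) ` {y. length y = s}) else \<infinity>)"

text \<open>Scaling by a non-negative real, with the convention 0 * \<infinity> = \<infinity>.\<close>
definition wscale :: "real \<Rightarrow> 'd wrel \<Rightarrow> 'd wrel" where
  "wscale c \<gamma> = (fst \<gamma>, \<lambda>x. if snd \<gamma> x = \<infinity> then \<infinity> else ereal c * snd \<gamma> x)"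

definition wconst :: "real \<Rightarrow> 'd wrel \<Rightarrow> 'd wrel" where
  "wconst c \<gamma> = (fst \<gamma>, \<lambda>x. snd \<gamma> x + ereal c)"

text \<open>Topological closedness: for each arity m and feasibility set F, the relations
of \<Gamma> with arity m and Feas = F, viewed as points of R^F (embedded in the product
space 'd list \<Rightarrow> real by putting 0 outside F), form a closed set.\<close>
definition wcoords :: "'d list set \<Rightarrow> 'd wrel \<Rightarrow> ('d list \<Rightarrow> real)" where
  "wcoords F \<gamma> = (\<lambda>x. if x \<in> F then real_of_ereal (snd \<gamma> x) else 0)"

definition top_closed :: "'d wrel set \<Rightarrow> bool" where
  "top_closed \<Gamma> \<longleftrightarrow> (\<forall>m F. closed (wcoords F ` {\<gamma> \<in> \<Gamma>. fst \<gamma> = m \<and> Feas \<gamma> = F}))"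

definition weighted_relational_clone :: "'d wrel set \<Rightarrow> bool" where
  "weighted_relational_clone \<Gamma> \<longleftrightarrow>
     \<Gamma> \<subseteq> Phi \<and> phi_eq \<in> \<Gamma> \<and> phi_empty \<in> \<Gamma> \<and>
     (\<forall>\<gamma>1\<in>\<Gamma>. \<forall>\<gamma>2\<in>\<Gamma>. \<forall>r \<sigma> \<tau>. (\<forall>i<fst \<gamma>1. \<sigma> i < r) \<and> (\<forall>j<fst \<gamma>2. \<tau> j < r)
          \<longrightarrow> wadd r \<sigma> \<tau> \<gamma>1 \<gamma>2 \<in> \<Gamma>) \<and>
     (\<forall>\<gamma>\<in>\<Gamma>. \<forall>r s. fst \<gamma> = r + s \<longrightarrow> wmin r s \<gamma> \<in> \<Gamma>) \<and>
     (\<forall>\<gamma>\<in>\<Gamma>. \<forall>c. c \<ge> 0 \<longrightarrow> wscale c \<gamma> \<in> \<Gamma>) \<and>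
     (\<forall>\<gamma>\<in>\<Gamma>. \<forall>c. wconst c \<gamma> \<in> \<Gamma>) \<and>
     (\<forall>\<gamma>\<in>\<Gamma>. Opt \<gamma> \<in> \<Gamma>) \<and>
     top_closed \<Gamma>"

text \<open>A k-ary operation: a pair (k, f), f canonically undefined off lists of length k.\<close>
type_synonym 'd op = "nat \<times> ('d list \<Rightarrow> 'd)"

definition ops :: "nat \<Rightarrow> 'd op set" where
  "ops k = {(k, f) | f. \<forall>x. length x \<noteq> k \<longrightarrow> f x = undefined}"

definition all_ops :: "'d op set" where
  "all_ops = (\<Union>k\<in>{1..}. ops k)"

definition proj :: "nat \<Rightarrow> nat \<Rightarrow> 'd op" where
  "proj k i = (k, \<lambda>x. if length x = k then x ! i else undefined)"

definition projs :: "nat \<Rightarrow> 'd op set" where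
  "projs k = {proj k i | i. i < k}"

definition all_projs :: "'d op set" where
  "all_projs = (\<Union>k\<in>{1..}. projs k)"

definition app_op :: "'d op \<Rightarrow> nat \<Rightarrow> 'd list list \<Rightarrow> 'd list" where
  "app_op f m xs = map (\<lambda>j. snd f (map (\<lambda>x. x ! j) xs)) [0..<m]"

definition is_pol :: "'d op \<Rightarrow> 'd wrel \<Rightarrow> bool" where
  "is_pol f \<gamma> \<longleftrightarrow> (\<forall>xs. length xs = fst f \<and> set xs \<subseteq> Feas \<gamma> \<longrightarrow> app_op f (fst \<gamma>) xs \<in> Feas \<gamma>)"

definition Pol :: "'d wrel set \<Rightarrow> 'd op set" where
  "Pol \<Gamma> = {f \<in> all_ops. \<forall>\<gamma>\<in>\<Gamma>. is_pol f \<gamma>}"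

text \<open>A k-ary weighting (k \<ge> 1): a pair (k, w), w : O^(k) \<rightarrow> R (zero outside O^(k)).\<close>
type_synonym 'd weighting = "nat \<times> ('d op \<Rightarrow> real)"

definition is_weighting :: "'d weighting \<Rightarrow> bool" where
  "is_weighting \<omega> \<longleftrightarrow> fst \<omega> \<ge> 1 \<and>
     (\<forall>f. f \<notin> ops (fst \<omega>) \<longrightarrow> snd \<omega> f = 0) \<and>
     (\<Sum>f\<in>ops (fst \<omega>). snd \<omega> f) = 0 \<and>
     (\<forall>f\<in>ops (fst \<omega>). snd \<omega> f < 0 \<longrightarrow> f \<in> projs (fst \<omega>))"

definition wsupp :: "'d weighting \<Rightarrow> 'd op set" where
  "wsupp \<omega> = projs (fst \<omega>) \<union> {f \<in> ops (fst \<omega>). snd \<omega> f > 0}"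

definition supp_set :: "'d weighting set \<Rightarrow> 'd op set" where
  "supp_set \<Omega> = all_projs \<union> (\<Union>\<omega>\<in>\<Omega>. wsupp \<omega>)"

definition is_wpol :: "'d weighting \<Rightarrow> 'd wrel \<Rightarrow> bool" where
  "is_wpol \<omega> \<gamma> \<longleftrightarrow> is_weighting \<omega> \<and> (\<forall>f\<in>wsupp \<omega>. is_pol f \<gamma>) \<and>
     (\<forall>xs. length xs = fst \<omega> \<and> set xs \<subseteq> Feas \<gamma> \<longrightarrow>
        (\<Sum>f\<in>wsupp \<omega>. snd \<omega> f * real_of_ereal (snd \<gamma> (app_op f (fst \<gamma>) xs))) \<le> 0)"

definition wPol :: "'d wrel set \<Rightarrow> 'd weighting set" where
  "wPol \<Gamma> = {\<omega>. is_weighting \<omega> \<and> (\<forall>\<gamma>\<in>\<Gamma>. is_wpol \<omega> \<gamma>)}"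

end

theory Submission
  imports Defs
begin

lemma coord_cont [continuous_intros]: "continuous_on S (\<lambda>v::'i \<Rightarrow> real. v i)"
  by (rule continuous_on_subset[OF continuous_on_product_coordinates]) simp

lemma box_compact:
  fixes I :: "'i set"
  shows "compact {v::'i \<Rightarrow> real. \<forall>i. v i \<in> (if i \<in> I then {-B..B} else {0})}"
proof -
  let ?S = "\<lambda>i. if i \<in> I then {-B..B} else {0::real}"
  have "compactin (product_topology (\<lambda>i. euclidean) UNIV) (PiE UNIV ?S)"
    by (subst compactin_PiE) auto
  moreover have "PiE UNIV ?S = {v. \<forall>i. v i \<in> ?S i}" by (auto simp: PiE_def Pi_def)
  ultimately show ?thesis by (simp add: euclidean_product_topology)
qed

lemma sq_max_le: "(max 0 (u - s))\<^sup>2 \<le> (max 0 u - s)\<^sup>2" for u s :: real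
proof (cases "u - s \<le> 0")
  case True then show ?thesis by simp
next
  case False
  then have "0 < u - s" "u - s \<le> max 0 u - s" by auto
  then show ?thesis by (simp add: power_mono)
qed

lemma sep_lemma:
  fixes C :: "('i \<Rightarrow> real) set" and I J :: "'i set"
  assumes fin: "finite I" and aI: "a \<in> I" and aJ: "a \<notin> J" and JI: "J \<subseteq> I"
    and supp: "\<And>c i. c \<in> C \<Longrightarrow> i \<notin> I \<Longrightarrow> c i = 0"
    and clo: "closed C"
    and add: "\<And>c d. c \<in> C \<Longrightarrow> d \<in> C \<Longrightarrow> (\<lambda>i. c i + d i) \<in> C"
    and scl: "\<And>c t. c \<in> C \<Longrightarrow> t \<ge> 0 \<Longrightarrow> (\<lambda>i. t * c i) \<in> C"
    and zero: "(\<lambda>i. 0) \<in> C"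
    and opt: "\<And>c. c \<in> C \<Longrightarrow> (\<forall>j\<in>J. c j = 0) \<Longrightarrow> (\<forall>i\<in>I. c i \<ge> 0) \<Longrightarrow> (\<forall>i\<in>I. c i = 0)"
  shows "\<exists>w. (\<forall>c\<in>C. (\<Sum>i\<in>I. w i * c i) \<le> 0) \<and> w a > 0 \<and> (\<forall>i\<in>I-J. w i \<ge> 0)"
proof -
  define ea :: "'i \<Rightarrow> real" where "ea i = (if i = a then 1 else 0)" for i
  define h :: "('i \<Rightarrow> real) \<Rightarrow> real" where
    "h v = (\<Sum>i\<in>I. if i \<in> J then (v i)\<^sup>2 else (max 0 (ea i - v i))\<^sup>2)" for v
  define \<phi> :: "('i \<Rightarrow> real) \<Rightarrow> real" where
    "\<phi> v = (\<Sum>i\<in>I. if i \<in> J then \<bar>v i\<bar> else max 0 (- v i))" for v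
  define n1 :: "('i \<Rightarrow> real) \<Rightarrow> real" where "n1 v = (\<Sum>i\<in>I. \<bar>v i\<bar>)" for v
  define Box :: "real \<Rightarrow> ('i \<Rightarrow> real) set" where
    "Box B = {v. \<forall>i. v i \<in> (if i \<in> I then {-B..B} else {0})}" for B
  have cBox: "compact (Box B)" for B unfolding Box_def by (rule box_compact)
  have hcont: "continuous_on S h" for S
    unfolding h_def
    apply (intro continuous_on_sum)
    subgoal for i by (cases "i \<in> J") (auto intro!: continuous_intros)
    done
  have phicont: "continuous_on S \<phi>" for S
    unfolding \<phi>_def
    apply (intro continuous_on_sum)
    subgoal for i by (cases "i \<in> J") (auto intro!: continuous_intros)
    done
  have n1cont: "continuous_on S n1" for S
    unfolding n1_def by (intro continuous_intros)
  have phi_nonneg: "\<phi> v \<ge> 0" for v unfolding \<phi>_def by (intro sum_nonneg) auto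
  have h_nonneg_terms: "\<And>i. i \<in> I \<Longrightarrow> (if i \<in> J then (v i)\<^sup>2 else (max 0 (ea i - v i))\<^sup>2) \<le> h v" for v
    unfolding h_def using fin by (intro member_le_sum) auto
  define S where "S = (C \<inter> Box 1) \<inter> {v. n1 v = 1}"
  have cS: "compact S"
  proof -
    have "closed {v. n1 v = 1}"
      by (rule closed_Collect_eq) (auto intro: n1cont continuous_intros)
    then have "closed (C \<inter> {v. n1 v = 1})" using clo by blast
    moreover have "S = (C \<inter> {v. n1 v = 1}) \<inter> Box 1" unfolding S_def by blast
    ultimately show ?thesis using cBox by (simp add: closed_Int_compact)
  qed
  have phipos: "\<phi> s > 0" if "s \<in> S" for s
  proof (rule ccontr)
    assume "\<not> \<phi> s > 0"
    then have "\<phi> s = 0" using phi_nonneg[of s] by linarith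
    then have "\<forall>i\<in>I. (if i \<in> J then \<bar>s i\<bar> else max 0 (- s i)) = 0"
      unfolding \<phi>_def using fin by (subst sum_nonneg_eq_0_iff[symmetric]) auto
    then have "(\<forall>j\<in>J. s j = 0)" "(\<forall>i\<in>I. s i \<ge> 0)" using JI by (auto split: if_splits)
    then have "\<forall>i\<in>I. s i = 0" using opt that unfolding S_def by blast
    then have "n1 s = 0" unfolding n1_def by simp
    then show False using that unfolding S_def by simp
  qed
  obtain \<delta> where dpos: "\<delta> > 0" and dle: "\<And>s. s \<in> S \<Longrightarrow> \<delta> \<le> \<phi> s"
  proof (cases "S = {}")
    case True then show ?thesis using that[of 1] by auto
  next
    case False
    obtain s0 where "s0 \<in> S" "\<forall>s\<in>S. \<phi> s0 \<le> \<phi> s"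
      using continuous_attains_inf[OF cS False phicont] by blast
    then show ?thesis using that[of "\<phi> s0"] phipos by auto
  qed
  have n1bound: "\<delta> * n1 c \<le> \<phi> c" if "c \<in> C" for c
  proof (cases "n1 c = 0")
    case True then show ?thesis using phi_nonneg[of c] by simp
  next
    case False
    have n1nn: "n1 c \<ge> 0" unfolding n1_def by (simp add: sum_nonneg)
    with False have np: "n1 c > 0" by linarith
    define c' where "c' = (\<lambda>i. (1 / n1 c) * c i)"
    have "c' \<in> C" unfolding c'_def using scl[OF that, of "1 / n1 c"] np by simp
    moreover have "c' \<in> Box 1"
    proof -
      have "\<bar>c i\<bar> \<le> n1 c" if "i \<in> I" for i
        unfolding n1_def using fin that by (intro member_le_sum) auto
      then show ?thesis unfolding Box_def c'_def using np supp[OF \<open>c \<in> C\<close>]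
        by (auto simp: abs_le_iff divide_simps) (smt (verit) that)
    qed
    moreover have "n1 c' = 1"
    proof -
      have "n1 c' = n1 c / n1 c" unfolding c'_def n1_def using np
        by (simp add: abs_mult sum_divide_distrib[symmetric])
      then show ?thesis using np by simp
    qed
    ultimately have "c' \<in> S" unfolding S_def by blast
    then have "\<delta> \<le> \<phi> c'" by (rule dle)
    moreover have "\<phi> c' = \<phi> c / n1 c"
    proof -
      have "(if i \<in> J then \<bar>c' i\<bar> else max 0 (- c' i)) = (1 / n1 c) * (if i \<in> J then \<bar>c i\<bar> else max 0 (- c i))" for i
        unfolding c'_def using np by (auto simp: abs_mult max_def mult_le_0_iff divide_le_0_iff)
      then show ?thesis unfolding \<phi>_def by (simp add: sum_divide_distrib[symmetric])
    qed
    ultimately show ?thesis using np by (simp add: field_simps)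
  qed
  define B where "B = real (card I) / \<delta>"
  have inbox: "c \<in> Box B" if "c \<in> C" "h c \<le> 1" for c
  proof -
    have "\<phi> c \<le> (\<Sum>i\<in>I. 1)" unfolding \<phi>_def
    proof (rule sum_mono)
      fix i assume i: "i \<in> I"
      have t: "(if i \<in> J then (c i)\<^sup>2 else (max 0 (ea i - c i))\<^sup>2) \<le> 1"
        using h_nonneg_terms[OF i, of c] that by linarith
      show "(if i \<in> J then \<bar>c i\<bar> else max 0 (- c i)) \<le> 1"
      proof (cases "i \<in> J")
        case True
        then have "\<bar>c i\<bar>\<^sup>2 \<le> 1\<^sup>2" using t by simp
        then have "\<bar>c i\<bar> \<le> 1" using abs_le_square_iff by (metis abs_ge_zero abs_of_nonneg power2_le_imp_le zero_le_one)
        then show ?thesis using True by simp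
      next
        case False
        then have "(max 0 (ea i - c i))\<^sup>2 \<le> 1\<^sup>2" using t by simp
        then have "max 0 (ea i - c i) \<le> 1" by (rule power2_le_imp_le) simp
        moreover have "ea i \<ge> 0" unfolding ea_def by simp
        ultimately show ?thesis using False by auto
      qed
    qed
    then have "\<delta> * n1 c \<le> real (card I)" using n1bound[OF that(1)] by simp
    then have n1c: "n1 c \<le> B" unfolding B_def using dpos by (simp add: field_simps)
    have "\<bar>c i\<bar> \<le> n1 c" if "i \<in> I" for i
      unfolding n1_def using fin that by (intro member_le_sum) auto
    then show ?thesis unfolding Box_def using n1c supp[OF that(1)] by (auto simp: abs_le_iff) (smt (verit))+
  qed
  have h0: "h (\<lambda>i. 0) = 1"
  proof -
    have "h (\<lambda>i. 0) = (\<Sum>i\<in>I. if i = a then 1 else 0)"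
      unfolding h_def ea_def by (intro sum.cong) (use aJ in auto)
    also have "\<dots> = 1" using fin aI by simp
    finally show ?thesis .
  qed
  have B0: "(\<lambda>i. 0) \<in> Box B" using inbox[OF zero] h0 by simp
  obtain p where pK: "p \<in> C \<inter> Box B" and pmin: "\<forall>c\<in>C \<inter> Box B. h p \<le> h c"
    using continuous_attains_inf[of "C \<inter> Box B" h] clo cBox hcont zero B0
    by (auto simp: closed_Int_compact)
  have pC: "p \<in> C" using pK by blast
  have pglob: "h p \<le> h c" if "c \<in> C" for c
  proof (cases "h c \<le> 1")
    case True then show ?thesis using pmin inbox that by blast
  next
    case False
    have "h p \<le> h (\<lambda>i. 0)" using pmin zero B0 by blast
    then show ?thesis using False h0 by linarith
  qed
  define w where "w i = (if i \<in> J then - p i else max 0 (ea i - p i))" for i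
  have hp: "h p = (\<Sum>i\<in>I. (w i)\<^sup>2)" unfolding h_def w_def by (intro sum.cong) auto
  have key: "h (\<lambda>i. p i + t * d i) \<le> (\<Sum>i\<in>I. (w i)\<^sup>2) - 2 * t * (\<Sum>i\<in>I. w i * d i) + t\<^sup>2 * (\<Sum>i\<in>I. (d i)\<^sup>2)" for t d
  proof -
    have "h (\<lambda>i. p i + t * d i) \<le> (\<Sum>i\<in>I. (w i - t * d i)\<^sup>2)"
      unfolding h_def
    proof (rule sum_mono)
      fix i assume "i \<in> I"
      show "(if i \<in> J then (p i + t * d i)\<^sup>2 else (max 0 (ea i - (p i + t * d i)))\<^sup>2) \<le> (w i - t * d i)\<^sup>2"
      proof (cases "i \<in> J")
        case True then show ?thesis unfolding w_def by (simp add: power2_eq_square algebra_simps)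
      next
        case False then show ?thesis unfolding w_def
          using sq_max_le[of "ea i - p i" "t * d i"] by (simp add: algebra_simps)
      qed
    qed
    also have "\<dots> = (\<Sum>i\<in>I. (w i)\<^sup>2) - 2 * t * (\<Sum>i\<in>I. w i * d i) + t\<^sup>2 * (\<Sum>i\<in>I. (d i)\<^sup>2)"
      by (simp add: power2_eq_square algebra_simps sum.distrib sum_subtractf sum_distrib_left)
    finally show ?thesis .
  qed
  have dir: "(\<Sum>i\<in>I. w i * d i) \<le> 0"
    if dC: "\<And>t. 0 < t \<Longrightarrow> t \<le> 1 \<Longrightarrow> (\<lambda>i. p i + t * d i) \<in> C" for d
  proof (rule ccontr)
    define W where "W = (\<Sum>i\<in>I. w i * d i)"
    define Q where "Q = (\<Sum>i\<in>I. (d i)\<^sup>2)"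
    assume "\<not> (\<Sum>i\<in>I. w i * d i) \<le> 0"
    then have Wp: "W > 0" unfolding W_def by simp
    have Qn: "Q \<ge> 0" unfolding Q_def by (simp add: sum_nonneg)
    define t where "t = min 1 (W / (Q + 1))"
    have tp: "0 < t" "t \<le> 1" unfolding t_def using Wp Qn by auto
    have "h p \<le> h (\<lambda>i. p i + t * d i)" using pglob dC[OF tp] by blast
    with key[of t d] hp have "0 \<le> - 2 * t * W + t\<^sup>2 * Q" unfolding W_def Q_def by linarith
    then have "2 * t * W \<le> t * (t * Q)" by (simp add: power2_eq_square algebra_simps)
    then have "2 * W \<le> t * Q" using tp by simp
    moreover have "t * Q \<le> (W / (Q + 1)) * Q" unfolding t_def using Qn by (intro mult_right_mono) auto
    moreover have "(W / (Q + 1)) * Q < W" using Wp Qn by (simp add: field_simps)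
    ultimately show False using Wp by linarith
  qed
  have wC: "(\<Sum>i\<in>I. w i * c i) \<le> 0" if "c \<in> C" for c
  proof (rule dir)
    fix t :: real assume "0 < t" "t \<le> 1"
    then show "(\<lambda>i. p i + t * c i) \<in> C" using add[OF pC scl[OF that]] by simp
  qed
  have wp1: "(\<Sum>i\<in>I. w i * p i) \<le> 0" using wC[OF pC] .
  have wp2: "(\<Sum>i\<in>I. w i * (- p i)) \<le> 0"
  proof (rule dir)
    fix t :: real assume "0 < t" "t \<le> 1"
    then have "(\<lambda>i. (1 - t) * p i) \<in> C" using scl[OF pC] by simp
    then show "(\<lambda>i. p i + t * - p i) \<in> C" by (simp add: algebra_simps)
  qed
  have wp: "(\<Sum>i\<in>I. w i * p i) = 0" using wp1 wp2 by (simp add: sum_negf)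
  have ww: "(\<Sum>i\<in>I. (w i)\<^sup>2) = (\<Sum>i\<in>I. w i * ea i) - (\<Sum>i\<in>I. w i * p i)"
  proof -
    have "(w i)\<^sup>2 = w i * ea i - w i * p i" if "i \<in> I" for i
    proof (cases "i \<in> J")
      case True then have "ea i = 0" using aJ unfolding ea_def by auto
      then show ?thesis using True unfolding w_def by (simp add: power2_eq_square)
    next
      case False then show ?thesis unfolding w_def by (simp add: power2_eq_square max_def algebra_simps)
    qed
    then show ?thesis by (simp add: sum_subtractf[symmetric])
  qed
  have wea: "(\<Sum>i\<in>I. w i * ea i) = w a"
  proof -
    have "(\<Sum>i\<in>I. w i * ea i) = (\<Sum>i\<in>I. if i = a then w a else 0)"
      unfolding ea_def by (intro sum.cong) auto
    then show ?thesis using fin aI by simp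
  qed
  have wapos: "w a > 0"
  proof (rule ccontr)
    assume "\<not> w a > 0"
    then have "(\<Sum>i\<in>I. (w i)\<^sup>2) \<le> 0" using ww wea wp by simp
    then have "\<forall>i\<in>I. (w i)\<^sup>2 = 0"
      proof -
      have "(\<Sum>i\<in>I. (w i)\<^sup>2) \<ge> 0" by (simp add: sum_nonneg)
      then have "(\<Sum>i\<in>I. (w i)\<^sup>2) = 0" using \<open>(\<Sum>i\<in>I. (w i)\<^sup>2) \<le> 0\<close> by linarith
      then show ?thesis using fin by (subst (asm) sum_nonneg_eq_0_iff) auto
    qed
    then have w0: "\<forall>i\<in>I. w i = 0" by simp
    have "\<forall>j\<in>J. p j = 0" using w0 JI unfolding w_def by force
    moreover have "\<forall>i\<in>I. p i \<ge> 0"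
    proof
      fix i assume i: "i \<in> I"
      show "p i \<ge> 0"
      proof (cases "i \<in> J")
        case True then show ?thesis using \<open>\<forall>j\<in>J. p j = 0\<close> by simp
      next
        case False
        then have "max 0 (ea i - p i) = 0" using w0 i unfolding w_def by auto
        moreover have "ea i \<ge> 0" unfolding ea_def by simp
        ultimately show ?thesis by linarith
      qed
    qed
    ultimately have "\<forall>i\<in>I. p i = 0" using opt pC by blast
    then have "p a = 0" using aI by blast
    moreover have "max 0 (ea a - p a) = 0" using w0 aI aJ unfolding w_def by auto
    ultimately show False unfolding ea_def by simp
  qed
  have "\<forall>i\<in>I-J. w i \<ge> 0" unfolding w_def by auto
  then show ?thesis using wC wapos by blast
qed



lemma fin_len: "finite {x::'d::finite list. length x = k}"
  by (rule finite_subset[OF _ finite_lists_length_eq[OF finite_class.finite_UNIV, of k]]) auto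

definition cols :: "nat \<Rightarrow> ('d::finite) list list" where
  "cols k = (SOME l. distinct l \<and> set l = {x. length x = k})"

lemma cols: "distinct (cols k :: 'd::finite list list) \<and> set (cols k) = {x::'d::finite list. length x = k}"
proof -
  have "\<exists>l. distinct l \<and> set l = {x::'d list. length x = k}"
    using finite_distinct_list[OF fin_len] by blast
  then show ?thesis unfolding cols_def by (rule someI_ex)
qed

definition xrow :: "nat \<Rightarrow> nat \<Rightarrow> ('d::finite) list" where
  "xrow k i = map (\<lambda>c. c ! i) (cols k)"

definition xs0 :: "nat \<Rightarrow> ('d::finite) list list" where
  "xs0 k = map (xrow k) [0..<k]"

definition idx :: "nat \<Rightarrow> 'd::finite list \<Rightarrow> nat" where
  "idx k l = (SOME j. j < length (cols k :: 'd list list) \<and> cols k ! j = l)"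

definition opz :: "nat \<Rightarrow> ('d::finite) list \<Rightarrow> 'd op" where
  "opz k z = (k, \<lambda>l. if length l = k then z ! idx k l else undefined)"

context fixes \<Gamma> :: "('d::finite) wrel set"
begin

abbreviation cl :: "nat \<Rightarrow> 'd list list" where "cl k \<equiv> cols k"

definition GG :: "nat \<Rightarrow> 'd op \<Rightarrow> 'd list" where
  "GG k g = app_op g (length (cl k)) (xs0 k)"

lemma cols_len: "c \<in> set (cl k) \<Longrightarrow> length c = k"
  using cols by blast

lemma GG_eq: "GG k g = map (snd g) (cl k)"
proof -
  have "map (\<lambda>x. x ! j) (xs0 k) = cl k ! j" if "j < length (cl k)" for j
  proof -
    have len: "length (cl k ! j) = k" using nth_mem[OF that] cols_len by blast
    have "map (\<lambda>x. x ! j) (xs0 k) = map (\<lambda>i. cl k ! j ! i) [0..<k]"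
      unfolding xs0_def xrow_def using that by simp
    also have "\<dots> = cl k ! j" using len map_nth[of "cl k ! j"] by simp
    finally show ?thesis .
  qed
  then show ?thesis unfolding GG_def app_op_def
    by (intro nth_equalityI) simp_all
qed

lemma GG_len: "length (GG k g) = length (cl k)"
  by (simp add: GG_eq)

lemma GG_inj: "g \<in> ops k \<Longrightarrow> g' \<in> ops k \<Longrightarrow> GG k g = GG k g' \<Longrightarrow> g = g'"
proof -
  assume g: "g \<in> ops k" and g': "g' \<in> ops k" and e: "GG k g = GG k g'"
  obtain f f' where gf: "g = (k, f)" "\<forall>x. length x \<noteq> k \<longrightarrow> f x = undefined"
    and gf': "g' = (k, f')" "\<forall>x. length x \<noteq> k \<longrightarrow> f' x = undefined"
    using g g' unfolding ops_def by blast
  have eq: "\<forall>c\<in>set (cl k). f c = f' c" using e unfolding GG_eq gf gf' by (simp add: map_eq_conv)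
  have "f x = f' x" for x
  proof (cases "length x = k")
    case True then have "x \<in> set (cl k)" using cols by blast
    then show ?thesis using eq by blast
  next
    case False then show ?thesis using gf(2) gf'(2) by simp
  qed
  then show ?thesis using gf gf' by auto
qed

lemma GG_proj: "GG k (proj k i) = xrow k i"
  unfolding GG_eq xrow_def proj_def using cols_len by (auto intro: map_cong)

lemma proj_ops: "proj k i \<in> ops k"
  unfolding ops_def proj_def by auto

lemma idx: "length l = k \<Longrightarrow> idx k l < length (cl k) \<and> cl k ! idx k l = l"
proof -
  assume "length l = k"
  then have "l \<in> set (cl k)" using cols by blast
  then obtain j where j: "j < length (cl k)" "cl k ! j = l" using in_set_conv_nth[THEN iffD1] by metis
  have "\<exists>j. j < length (cl k) \<and> cl k ! j = l" using j by blast
  then show ?thesis unfolding idx_def by (rule someI_ex)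
qed

lemma idx_nth: "j < length (cl k) \<Longrightarrow> idx k (cl k ! j) = j"
proof -
  assume j: "j < length (cl k)"
  have len: "length (cl k ! j) = k" using nth_mem[OF j] cols_len by blast
  from idx[OF len] have "idx k (cl k ! j) < length (cl k)" "cl k ! idx k (cl k ! j) = cl k ! j" by auto
  moreover have "distinct (cl k)" using cols by blast
  ultimately show ?thesis using nth_eq_iff_index_eq[of "cl k" "idx k (cl k ! j)" j] j by simp
qed

lemma opz_ops: "opz k (z::'d list) \<in> ops k" unfolding opz_def ops_def by auto

lemma GG_opz: "length z = length (cl k) \<Longrightarrow> GG k (opz k z) = z"
  unfolding GG_eq opz_def
  by (intro nth_equalityI) (auto simp: cols_len idx_nth)

lemma ops_finite: "finite (ops k :: 'd op set)"
proof (rule finite_imageD)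
  show "inj_on (GG k) (ops k :: 'd op set)" by (rule inj_onI) (rule GG_inj)
  have "GG k ` (ops k :: 'd op set) \<subseteq> {z. length z = length (cl k)}"
    using GG_len by blast
  then show "finite (GG k ` (ops k :: 'd op set))" by (rule finite_subset) (rule fin_len)
qed

lemma xrow_GG_proj: "GG k g = xrow k i \<Longrightarrow> g \<in> ops k \<Longrightarrow> g = proj k i"
  using GG_inj[of g k "proj k i"] GG_proj[of k i] proj_ops[of k i] by simp

lemma cols_ne: "cl k \<noteq> []"
proof -
  have s: "set (cl k) = {x. length x = k}" using cols by blast
  have "replicate k undefined \<in> set (cl k)" unfolding s by simp
  then show ?thesis by auto
qed

end


lemma half_ereal: "a \<noteq> -\<infinity> \<Longrightarrow> a \<noteq> \<infinity> \<Longrightarrow> ereal (1/2) * (a + a) = a"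
  by (cases a) auto

lemma app_op_len: "length (app_op g m xs) = m" unfolding app_op_def by simp

lemma proj_app: "i < length xs \<Longrightarrow> length (xs ! i) = m \<Longrightarrow> app_op (proj (length xs) i) m xs = xs ! i"
  unfolding app_op_def proj_def by (intro nth_equalityI) auto

lemma proj_pol: "i < k \<Longrightarrow> is_pol (proj k i) \<gamma>"
  unfolding is_pol_def
proof (intro allI impI)
  fix xs :: "'a list list" assume "i < k" and h: "length xs = fst (proj k i) \<and> set xs \<subseteq> Feas \<gamma>"
  then have l: "length xs = k" unfolding proj_def by simp
  have m: "xs ! i \<in> Feas \<gamma>" using h l \<open>i < k\<close> by (auto simp: nth_mem subset_iff)
  then have "length (xs ! i) = fst \<gamma>" unfolding Feas_def by simp
  then show "app_op (proj k i) (fst \<gamma>) xs \<in> Feas \<gamma>"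
    using proj_app[of i xs "fst \<gamma>"] l \<open>i < k\<close> m by simp
qed

lemma proj_all_ops: "1 \<le> k \<Longrightarrow> proj k i \<in> all_ops"
  unfolding all_ops_def using proj_ops by blast

lemma proj_Pol: "1 \<le> k \<Longrightarrow> i < k \<Longrightarrow> proj k i \<in> Pol \<Gamma>"
  unfolding Pol_def using proj_all_ops proj_pol by blast

lemma all_projs_Pol: "all_projs \<subseteq> Pol (\<Gamma> :: 'd wrel set)"
proof
  fix x :: "'d op" assume "x \<in> all_projs"
  then obtain k i where "k \<ge> 1" "i < k" "x = proj k i" unfolding all_projs_def projs_def by auto
  then show "x \<in> Pol \<Gamma>" using proj_Pol by blast
qed

locale wclone =
  fixes \<Gamma> :: "('d::finite) wrel set"
  assumes clone: "weighted_relational_clone \<Gamma>"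
begin

lemma sub: "\<Gamma> \<subseteq> Phi" using clone unfolding weighted_relational_clone_def by blast

lemma ninf: "\<gamma> \<in> \<Gamma> \<Longrightarrow> snd \<gamma> x \<noteq> -\<infinity>"
  using sub unfolding Phi_def by (cases \<gamma>) auto

lemma offlen: "\<gamma> \<in> \<Gamma> \<Longrightarrow> length x \<noteq> fst \<gamma> \<Longrightarrow> snd \<gamma> x = \<infinity>"
  using sub unfolding Phi_def by (cases \<gamma>) auto

lemma add_in: "\<gamma>1 \<in> \<Gamma> \<Longrightarrow> \<gamma>2 \<in> \<Gamma> \<Longrightarrow> (\<forall>i<fst \<gamma>1. \<sigma> i < r) \<Longrightarrow> (\<forall>j<fst \<gamma>2. \<tau> j < r) \<Longrightarrow> wadd r \<sigma> \<tau> \<gamma>1 \<gamma>2 \<in> \<Gamma>"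
  using clone unfolding weighted_relational_clone_def by blast

lemma scale_in: "\<gamma> \<in> \<Gamma> \<Longrightarrow> c \<ge> 0 \<Longrightarrow> wscale c \<gamma> \<in> \<Gamma>"
  using clone unfolding weighted_relational_clone_def by blast

lemma const_in: "\<gamma> \<in> \<Gamma> \<Longrightarrow> wconst c \<gamma> \<in> \<Gamma>"
  using clone unfolding weighted_relational_clone_def by blast

lemma opt_in: "\<gamma> \<in> \<Gamma> \<Longrightarrow> Opt \<gamma> \<in> \<Gamma>"
  using clone unfolding weighted_relational_clone_def by blast

lemma eq_in: "phi_eq \<in> \<Gamma>"
  using clone unfolding weighted_relational_clone_def by blast

lemma closedG: "closed (wcoords F ` {\<gamma> \<in> \<Gamma>. fst \<gamma> = m \<and> Feas \<gamma> = F})"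
  using clone unfolding weighted_relational_clone_def top_closed_def by blast

abbreviation add2 :: "'d wrel \<Rightarrow> 'd wrel \<Rightarrow> 'd wrel" where
  "add2 \<gamma>1 \<gamma>2 \<equiv> wadd (fst \<gamma>1) (\<lambda>i. i) (\<lambda>i. i) \<gamma>1 \<gamma>2"

lemma add2_in: "\<gamma>1 \<in> \<Gamma> \<Longrightarrow> \<gamma>2 \<in> \<Gamma> \<Longrightarrow> fst \<gamma>2 = fst \<gamma>1 \<Longrightarrow> add2 \<gamma>1 \<gamma>2 \<in> \<Gamma>"
  by (rule add_in) auto

lemma add2_fst: "fst (add2 \<gamma>1 \<gamma>2) = fst \<gamma>1" unfolding wadd_def by simp

lemma add2_val: "fst \<gamma>2 = fst \<gamma>1 \<Longrightarrow> length x = fst \<gamma>1 \<Longrightarrow> snd (add2 \<gamma>1 \<gamma>2) x = snd \<gamma>1 x + snd \<gamma>2 x"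
proof -
  assume a: "fst \<gamma>2 = fst \<gamma>1" "length x = fst \<gamma>1"
  have "map ((!) x) [0..<fst \<gamma>1] = x" using map_nth[of x] a(2) by simp
  then show ?thesis unfolding wadd_def using a by simp
qed

lemma Feas_add2: "\<gamma>1 \<in> \<Gamma> \<Longrightarrow> \<gamma>2 \<in> \<Gamma> \<Longrightarrow> fst \<gamma>2 = fst \<gamma>1 \<Longrightarrow> Feas (add2 \<gamma>1 \<gamma>2) = Feas \<gamma>1 \<inter> Feas \<gamma>2"
proof -
  assume a: "\<gamma>1 \<in> \<Gamma>" "\<gamma>2 \<in> \<Gamma>" "fst \<gamma>2 = fst \<gamma>1"
  have "snd \<gamma>1 x + snd \<gamma>2 x < \<infinity> \<longleftrightarrow> snd \<gamma>1 x < \<infinity> \<and> snd \<gamma>2 x < \<infinity>" for x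
    using ninf[OF a(1), of x] ninf[OF a(2), of x]
    by (cases "snd \<gamma>1 x"; cases "snd \<gamma>2 x") auto
  then show ?thesis unfolding Feas_def using add2_val[OF a(3)] add2_fst a(3) by auto
qed

lemma scale_fst: "fst (wscale c \<gamma>) = fst \<gamma>" unfolding wscale_def by simp

lemma Feas_scale: "\<gamma> \<in> \<Gamma> \<Longrightarrow> Feas (wscale c \<gamma>) = Feas \<gamma>"
proof -
  assume a: "\<gamma> \<in> \<Gamma>"
  have "(if snd \<gamma> x = \<infinity> then \<infinity> else ereal c * snd \<gamma> x) < \<infinity> \<longleftrightarrow> snd \<gamma> x < \<infinity>" for x
    using ninf[OF a, of x] by (cases "snd \<gamma> x") auto
  then show ?thesis unfolding Feas_def wscale_def by auto
qed

lemma const_fst: "fst (wconst c \<gamma>) = fst \<gamma>" unfolding wconst_def by simp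

lemma Feas_const: "\<gamma> \<in> \<Gamma> \<Longrightarrow> Feas (wconst c \<gamma>) = Feas \<gamma>"
proof -
  assume a: "\<gamma> \<in> \<Gamma>"
  have "snd \<gamma> x + ereal c < \<infinity> \<longleftrightarrow> snd \<gamma> x < \<infinity>" for x
    using ninf[OF a, of x] by (cases "snd \<gamma> x") auto
  then show ?thesis unfolding Feas_def wconst_def by auto
qed

lemma fin_val: "\<gamma> \<in> \<Gamma> \<Longrightarrow> x \<in> Feas \<gamma> \<Longrightarrow> snd \<gamma> x = ereal (real_of_ereal (snd \<gamma> x))"
  using ninf[of \<gamma> x] unfolding Feas_def by (cases "snd \<gamma> x") auto

abbreviation CL :: "nat \<Rightarrow> 'd list list" where "CL k \<equiv> cols k"

lemma transfer:
  assumes g: "\<gamma> \<in> \<Gamma>" and ys: "length ys = k" "set ys \<subseteq> Feas \<gamma>"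
  shows "\<exists>\<gamma>'\<in>\<Gamma>. fst \<gamma>' = length (CL k) \<and> (\<forall>g. snd \<gamma>' (GG k g) = snd \<gamma> (app_op g (fst \<gamma>) ys))"
proof -
  define m where "m = fst \<gamma>"
  define M where "M = length (CL k)"
  define \<pi> where "\<pi> j = idx k (map (\<lambda>y. y ! j) ys)" for j
  have \<pi>: "\<pi> j < M \<and> CL k ! \<pi> j = map (\<lambda>y. y ! j) ys" for j
    unfolding \<pi>_def M_def using idx[of "map (\<lambda>y. y ! j) ys" k] ys(1) by simp
  define \<gamma>2 where "\<gamma>2 = wadd M \<pi> \<pi> \<gamma> \<gamma>"
  define \<gamma>' where "\<gamma>' = wscale (1/2) \<gamma>2"
  have in2: "\<gamma>2 \<in> \<Gamma>" unfolding \<gamma>2_def using add_in[OF g g] \<pi> by blast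
  have in': "\<gamma>' \<in> \<Gamma>" unfolding \<gamma>'_def by (rule scale_in[OF in2]) simp
  have fst': "fst \<gamma>' = M" unfolding \<gamma>'_def \<gamma>2_def wscale_def wadd_def by simp
  have val: "snd \<gamma>' (GG k g) = snd \<gamma> (app_op g (fst \<gamma>) ys)" for g
  proof -
    have lenG: "length (GG k g) = M" unfolding M_def by (rule GG_len)
    have mp: "map (\<lambda>i. GG k g ! \<pi> i) [0..<fst \<gamma>] = app_op g (fst \<gamma>) ys"
      unfolding app_op_def GG_eq using \<pi> unfolding M_def by (intro map_cong) auto
    have "snd \<gamma>2 (GG k g) = snd \<gamma> (app_op g (fst \<gamma>) ys) + snd \<gamma> (app_op g (fst \<gamma>) ys)"
      unfolding \<gamma>2_def wadd_def using lenG mp by simp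
    then show ?thesis unfolding \<gamma>'_def wscale_def using half_ereal[OF ninf[OF g]]
      by (cases "snd \<gamma> (app_op g (fst \<gamma>) ys) = \<infinity>") auto
  qed
  show ?thesis using in' fst' val unfolding M_def by blast
qed

lemma transfer_Feas:
  assumes g: "\<gamma> \<in> \<Gamma>" and ys: "length ys = k" "set ys \<subseteq> Feas \<gamma>"
    and g': "fst \<gamma>' = length (CL k)" "\<forall>g. snd \<gamma>' (GG k g) = snd \<gamma> (app_op g (fst \<gamma>) ys)"
  shows "GG k ` (Pol \<Gamma> \<inter> ops k) \<subseteq> Feas \<gamma>'"
proof
  fix z assume "z \<in> GG k ` (Pol \<Gamma> \<inter> ops k)"
  then obtain g where gp: "g \<in> Pol \<Gamma>" "g \<in> ops k" and z: "z = GG k g" by blast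
  have "fst g = k" using gp(2) unfolding ops_def by auto
  then have "app_op g (fst \<gamma>) ys \<in> Feas \<gamma>" using gp(1) g ys unfolding Pol_def is_pol_def by auto
  then show "z \<in> Feas \<gamma>'" unfolding Feas_def z using g'(1) g'(2)[rule_format, of g] GG_len[of k g] by simp
qed

lemma zero_rel: "\<exists>Z\<in>\<Gamma>. fst Z = length (CL k) \<and> (\<forall>z. length z = length (CL k) \<longrightarrow> snd Z z = 0)"
proof -
  define ys :: "'d list list" where "ys = replicate k [undefined, undefined]"
  have f: "set ys \<subseteq> Feas phi_eq" unfolding ys_def Feas_def phi_eq_def by auto
  have l: "length ys = k" unfolding ys_def by simp
  obtain Z where Z: "Z \<in> \<Gamma>" "fst Z = length (CL k)" "\<forall>g. snd Z (GG k g) = snd phi_eq (app_op g (fst (phi_eq :: 'd wrel)) ys)"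
    using transfer[OF eq_in l f] by blast
  have "snd Z z = 0" if "length z = length (CL k)" for z
  proof -
    have "snd Z z = snd phi_eq (app_op (opz k z) (fst (phi_eq :: 'd wrel)) ys)" using Z(3) GG_opz[OF that] by metis
    also have "\<dots> = 0" unfolding phi_eq_def app_op_def ys_def by simp
    finally show ?thesis .
  qed
  then show ?thesis using Z by blast
qed

end


lemma supp_sub: "supp_set (wPol (\<Gamma> :: ('d::finite) wrel set)) \<subseteq> Pol \<Gamma>"
proof
  fix x :: "'d op" assume "x \<in> supp_set (wPol \<Gamma>)"
  then consider "x \<in> all_projs" | \<omega> where "\<omega> \<in> wPol \<Gamma>" "x \<in> wsupp \<omega>"
    unfolding supp_set_def by blast
  then show "x \<in> Pol \<Gamma>"
  proof cases
    case 1 then show ?thesis using all_projs_Pol by blast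
  next
    case 2
    have w: "is_weighting \<omega>" "\<forall>\<gamma>\<in>\<Gamma>. is_wpol \<omega> \<gamma>" using 2(1) unfolding wPol_def by auto
    have "x \<in> ops (fst \<omega>)" using 2(2) proj_ops unfolding wsupp_def projs_def by auto
    moreover have "fst \<omega> \<ge> 1" using w(1) unfolding is_weighting_def by simp
    ultimately have "x \<in> all_ops" unfolding all_ops_def by auto
    moreover have "\<forall>\<gamma>\<in>\<Gamma>. is_pol x \<gamma>" using w(2) 2(2) unfolding is_wpol_def by blast
    ultimately show ?thesis unfolding Pol_def by blast
  qed
qed

lemma Feas_Opt: "Feas (Opt \<gamma>) = {x. x \<in> Feas \<gamma> \<and> (\<forall>y. length y = fst \<gamma> \<longrightarrow> snd \<gamma> x \<le> snd \<gamma> y)}"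
  unfolding Opt_def Feas_def by auto

context wclone begin

lemma not_feas_inf: "\<gamma> \<in> \<Gamma> \<Longrightarrow> length y = fst \<gamma> \<Longrightarrow> y \<notin> Feas \<gamma> \<Longrightarrow> snd \<gamma> y = \<infinity>"
  unfolding Feas_def by (cases "snd \<gamma> y") auto

lemma delta0:
  assumes k: "1 \<le> k"
  shows "\<exists>\<delta>\<in>\<Gamma>. fst \<delta> = length (CL k) \<and> Feas \<delta> = GG k ` (Pol \<Gamma> \<inter> ops k)"
proof -
  define F where "F = GG k ` (Pol \<Gamma> \<inter> ops k)"
  define M where "M = length (CL k)"
  have FM: "\<forall>z\<in>F. length z = M" unfolding F_def M_def using GG_len by blast
  have excl: "\<exists>\<gamma>'\<in>\<Gamma>. fst \<gamma>' = M \<and> F \<subseteq> Feas \<gamma>' \<and> z \<notin> Feas \<gamma>'"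
    if z: "z \<notin> F" "length z = M" for z
  proof -
    define g where "g = opz k z"
    have gops: "g \<in> ops k" unfolding g_def by (rule opz_ops)
    have Gg: "GG k g = z" unfolding g_def using GG_opz z(2) unfolding M_def by blast
    have "g \<notin> Pol \<Gamma>" using z(1) Gg gops unfolding F_def by blast
    moreover have "g \<in> all_ops" using gops k unfolding all_ops_def by auto
    ultimately obtain \<gamma> where g: "\<gamma> \<in> \<Gamma>" "\<not> is_pol g \<gamma>" unfolding Pol_def by blast
    have fg: "fst g = k" unfolding g_def opz_def by simp
    obtain ys where ys: "length ys = k" "set ys \<subseteq> Feas \<gamma>" "app_op g (fst \<gamma>) ys \<notin> Feas \<gamma>"
      using g(2) fg unfolding is_pol_def by auto
    obtain \<gamma>' where g': "\<gamma>' \<in> \<Gamma>" "fst \<gamma>' = length (CL k)" "\<forall>g. snd \<gamma>' (GG k g) = snd \<gamma> (app_op g (fst \<gamma>) ys)"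
      using transfer[OF g(1) ys(1) ys(2)] by blast
    have "F \<subseteq> Feas \<gamma>'" unfolding F_def by (rule transfer_Feas[OF g(1) ys(1) ys(2) g'(2) g'(3)])
    moreover have "snd \<gamma> (app_op g (fst \<gamma>) ys) = \<infinity>"
      using not_feas_inf[OF g(1) _ ys(3)] app_op_len by blast
    then have "snd \<gamma>' z = \<infinity>" using g'(3)[rule_format, of g] Gg by simp
    then have "z \<notin> Feas \<gamma>'" unfolding Feas_def by auto
    ultimately show ?thesis using g' unfolding M_def by blast
  qed
  have ind: "finite A \<Longrightarrow> \<exists>\<delta>\<in>\<Gamma>. fst \<delta> = M \<and> F \<subseteq> Feas \<delta> \<and> (\<forall>z\<in>A. length z = M \<longrightarrow> z \<notin> F \<longrightarrow> z \<notin> Feas \<delta>)" for A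
  proof (induction A rule: finite_induct)
    case empty
    obtain Z where Z: "Z \<in> \<Gamma>" "fst Z = M" "\<forall>z. length z = M \<longrightarrow> snd Z z = 0"
      using zero_rel[of k] unfolding M_def by blast
    have "F \<subseteq> Feas Z" using FM Z unfolding Feas_def by auto
    then show ?case using Z by blast
  next
    case (insert z A)
    then obtain \<delta> where d: "\<delta> \<in> \<Gamma>" "fst \<delta> = M" "F \<subseteq> Feas \<delta>"
      "\<forall>z\<in>A. length z = M \<longrightarrow> z \<notin> F \<longrightarrow> z \<notin> Feas \<delta>" by blast
    show ?case
    proof (cases "length z = M \<and> z \<notin> F")
      case False then show ?thesis using d by blast
    next
      case True
      then obtain \<gamma>' where g': "\<gamma>' \<in> \<Gamma>" "fst \<gamma>' = M" "F \<subseteq> Feas \<gamma>'" "z \<notin> Feas \<gamma>'"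
        using excl by blast
      have "fst \<gamma>' = fst \<delta>" using g' d by simp
      then have "add2 \<delta> \<gamma>' \<in> \<Gamma>" "fst (add2 \<delta> \<gamma>') = M" "Feas (add2 \<delta> \<gamma>') = Feas \<delta> \<inter> Feas \<gamma>'"
        using add2_in[OF d(1) g'(1)] add2_fst[of \<delta> \<gamma>'] d(2) Feas_add2[OF d(1) g'(1)] by auto
      then show ?thesis using d g' by blast
    qed
  qed
  obtain \<delta> where d: "\<delta> \<in> \<Gamma>" "fst \<delta> = M" "F \<subseteq> Feas \<delta>"
    "\<forall>z\<in>{z. length z = M}. length z = M \<longrightarrow> z \<notin> F \<longrightarrow> z \<notin> Feas \<delta>"
    using ind[OF fin_len] by blast
  have "Feas \<delta> \<subseteq> F" using d unfolding Feas_def by auto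
  then show ?thesis using d unfolding F_def M_def by blast
qed

lemma main:
  assumes fP: "f \<in> Pol \<Gamma>" and fnp: "f \<notin> all_projs"
  shows "\<exists>\<omega>\<in>wPol \<Gamma>. f \<in> wsupp \<omega>"
proof -
  define k where "k = fst f"
  have "f \<in> all_ops" using fP unfolding Pol_def by blast
  then obtain j where j: "j \<ge> 1" "f \<in> ops j" unfolding all_ops_def by auto
  then have kj: "k = j" unfolding k_def ops_def by auto
  have fops: "f \<in> ops k" and k1: "1 \<le> k" using j kj by auto
  define M where "M = length (CL k)"
  define P where "P = Pol \<Gamma> \<inter> ops k"
  define F where "F = GG k ` P"
  define J where "J = (xrow k ` {0..<k} :: 'd list set)"
  obtain \<delta>0 where d0: "\<delta>0 \<in> \<Gamma>" "fst \<delta>0 = M" "Feas \<delta>0 = F"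
    using delta0[OF k1] unfolding M_def F_def P_def by blast
  define Z0 where "Z0 = wscale 0 \<delta>0"
  have Z0: "Z0 \<in> \<Gamma>" "fst Z0 = M" "Feas Z0 = F"
    unfolding Z0_def using scale_in[OF d0(1), of 0] scale_fst[of 0 \<delta>0] d0 Feas_scale[OF d0(1), of 0] by auto
  have Z0v: "snd Z0 z = 0" if "z \<in> F" for z
  proof -
    have "snd \<delta>0 z = ereal (real_of_ereal (snd \<delta>0 z))" using fin_val[OF d0(1)] that d0(3) by blast
    then obtain r where "snd \<delta>0 z = ereal r" by blast
    then show ?thesis unfolding Z0_def wscale_def by (simp add: zero_ereal_def)
  qed
  define S where "S = {\<gamma> \<in> \<Gamma>. fst \<gamma> = M \<and> Feas \<gamma> = F}"
  define C where "C = wcoords F ` S"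
  have FM: "\<forall>z\<in>F. length z = M" unfolding F_def M_def using GG_len by blast
  have finF: "finite F"
    by (rule finite_subset[OF _ fin_len[of M]]) (use FM in auto)
  have PGG: "g \<in> P" if gg: "g \<in> ops k" "GG k g \<in> F" for g
  proof -
    obtain g' where g': "g' \<in> P" "GG k g = GG k g'" using gg(2) unfolding F_def by blast
    have "g' \<in> ops k" using g'(1) unfolding P_def by blast
    then have "g = g'" using GG_inj[OF gg(1) _ g'(2)] by blast
    then show ?thesis using g'(1) by simp
  qed
  have projP: "proj k i \<in> P" if "i < k" for i
    unfolding P_def using proj_Pol[OF k1 that] proj_ops by blast
  have JF: "J \<subseteq> F"
  proof
    fix x assume "x \<in> J"
    then obtain i where i: "i < k" "x = xrow k i" unfolding J_def by auto
    have "x = GG k (proj k i)" using i(2) by (simp add: GG_proj)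
    then show "x \<in> F" using projP[OF i(1)] unfolding F_def by blast
  qed
  have aF: "GG k f \<in> F" unfolding F_def P_def using fP fops by blast
  have aJ: "GG k f \<notin> J"
  proof
    assume "GG k f \<in> J"
    then obtain i where i: "i < k" "GG k f = xrow k i" unfolding J_def by auto
    then have "f = proj k i" using xrow_GG_proj[OF i(2) fops] by blast
    then show False using fnp i k1 unfolding all_projs_def projs_def by auto
  qed
  have val: "snd \<gamma> i = ereal (wcoords F \<gamma> i)" if "\<gamma> \<in> S" "i \<in> F" for \<gamma> i
    using fin_val[of \<gamma> i] that unfolding S_def wcoords_def by auto
  have supp: "c i = 0" if "c \<in> C" "i \<notin> F" for c i
    using that unfolding C_def wcoords_def by auto
  have clo: "closed C" unfolding C_def S_def by (rule closedG)
  have add: "(\<lambda>i. c i + d i) \<in> C" if cd: "c \<in> C" "d \<in> C" for c d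
  proof -
    obtain \<gamma>1 \<gamma>2 where g: "\<gamma>1 \<in> S" "\<gamma>2 \<in> S" "c = wcoords F \<gamma>1" "d = wcoords F \<gamma>2"
      using cd unfolding C_def by blast
    have g1: "\<gamma>1 \<in> \<Gamma>" "fst \<gamma>1 = M" "Feas \<gamma>1 = F" and g2: "\<gamma>2 \<in> \<Gamma>" "fst \<gamma>2 = M" "Feas \<gamma>2 = F"
      using g unfolding S_def by auto
    have e: "fst \<gamma>2 = fst \<gamma>1" using g1 g2 by simp
    have inS: "add2 \<gamma>1 \<gamma>2 \<in> S" unfolding S_def
      using add2_in[OF g1(1) g2(1) e] add2_fst[of \<gamma>1 \<gamma>2] Feas_add2[OF g1(1) g2(1) e] g1 g2 by auto
    have "wcoords F (add2 \<gamma>1 \<gamma>2) = (\<lambda>i. c i + d i)"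
    proof
      fix i show "wcoords F (add2 \<gamma>1 \<gamma>2) i = c i + d i"
      proof (cases "i \<in> F")
        case True
        have "snd (add2 \<gamma>1 \<gamma>2) i = snd \<gamma>1 i + snd \<gamma>2 i"
          using add2_val[OF e] FM True g1(2) by auto
        also have "\<dots> = ereal (c i + d i)" using val[OF g(1) True] val[OF g(2) True] g(3,4) by simp
        finally show ?thesis unfolding wcoords_def using True by simp
      next
        case False then show ?thesis unfolding wcoords_def g(3,4) by simp
      qed
    qed
    then show ?thesis using inS unfolding C_def by (metis image_eqI)
  qed
  have scl: "(\<lambda>i. t * c i) \<in> C" if ct: "c \<in> C" "t \<ge> 0" for c t
  proof -
    obtain \<gamma> where g: "\<gamma> \<in> S" "c = wcoords F \<gamma>" using ct(1) unfolding C_def by blast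
    have g1: "\<gamma> \<in> \<Gamma>" "fst \<gamma> = M" "Feas \<gamma> = F" using g unfolding S_def by auto
    have inS: "wscale t \<gamma> \<in> S" unfolding S_def
      using scale_in[OF g1(1) ct(2)] scale_fst[of t \<gamma>] Feas_scale[OF g1(1)] g1 by auto
    have "wcoords F (wscale t \<gamma>) = (\<lambda>i. t * c i)"
    proof
      fix i show "wcoords F (wscale t \<gamma>) i = t * c i"
      proof (cases "i \<in> F")
        case True
        then show ?thesis using val[OF g(1) True] g(2) unfolding wcoords_def wscale_def by simp
      next
        case False then show ?thesis unfolding wcoords_def g(2) by simp
      qed
    qed
    then show ?thesis using inS unfolding C_def by (metis image_eqI)
  qed
  have Z0S: "Z0 \<in> S" unfolding S_def using Z0 by auto
  have cst: "(\<lambda>i. if i \<in> F then r else 0) \<in> C" for r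
  proof -
    have inS: "wconst r Z0 \<in> S" unfolding S_def
      using const_in[OF Z0(1)] const_fst[of r Z0] Feas_const[OF Z0(1)] Z0 by auto
    have "wcoords F (wconst r Z0) = (\<lambda>i. if i \<in> F then r else 0)"
      unfolding wcoords_def wconst_def using Z0v by auto
    then show ?thesis using inS unfolding C_def by (metis image_eqI)
  qed
  have zero: "(\<lambda>i. 0) \<in> C" using cst[of 0] by simp
  have opt: "\<forall>i\<in>F. c i = 0" if oh: "c \<in> C" "\<forall>j\<in>J. c j = 0" "\<forall>i\<in>F. c i \<ge> 0" for c
  proof
    fix z assume zF: "z \<in> F"
    obtain \<gamma> where g: "\<gamma> \<in> S" "c = wcoords F \<gamma>" using oh(1) unfolding C_def by blast
    have g1: "\<gamma> \<in> \<Gamma>" "fst \<gamma> = M" "Feas \<gamma> = F" using g unfolding S_def by auto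
    have v: "snd \<gamma> i = ereal (c i)" if "i \<in> F" for i using val[OF g(1) that] g(2) by simp
    have jmin: "snd \<gamma> j \<le> snd \<gamma> y" if "j \<in> J" "length y = M" for j y
    proof -
      have "snd \<gamma> j = 0" using v[of j] that(1) JF \<open>\<forall>j\<in>J. c j = 0\<close> by (auto simp: zero_ereal_def)
      moreover have "snd \<gamma> y \<ge> 0"
      proof (cases "y \<in> F")
        case True then show ?thesis using v[OF True] \<open>\<forall>i\<in>F. c i \<ge> 0\<close> by simp
      next
        case False then show ?thesis using not_feas_inf[OF g1(1)] that(2) g1 by simp
      qed
      ultimately show ?thesis by simp
    qed
    have JO: "set (xs0 k) \<subseteq> Feas (Opt \<gamma>)"
    proof
      fix x :: "'d list" assume "x \<in> set (xs0 k)"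
      then have xJ: "x \<in> J" unfolding xs0_def J_def by auto
      then have "x \<in> Feas \<gamma>" "length x = M" using JF g1 FM by auto
      then show "x \<in> Feas (Opt \<gamma>)" using jmin[OF xJ] g1 unfolding Feas_Opt by auto
    qed
    obtain g' where g': "g' \<in> P" "z = GG k g'" using zF unfolding F_def by blast
    have "is_pol g' (Opt \<gamma>)" using g'(1) opt_in[OF g1(1)] unfolding P_def Pol_def by blast
    moreover have "fst g' = k" using g'(1) unfolding P_def ops_def by auto
    moreover have "length (xs0 k) = k" unfolding xs0_def by simp
    ultimately have "app_op g' (fst (Opt \<gamma>)) (xs0 k) \<in> Feas (Opt \<gamma>)" using JO unfolding is_pol_def by auto
    moreover have "fst (Opt \<gamma>) = M" unfolding Opt_def using g1 by simp
    ultimately have "z \<in> Feas (Opt \<gamma>)" using g'(2) unfolding GG_def M_def by simp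
    moreover have "length (xrow k 0 :: 'd list) = M"
    proof -
      have "(xrow k 0 :: 'd list) \<in> J" unfolding J_def using k1 by (intro imageI) simp
      then show ?thesis using JF FM by blast
    qed
    ultimately have "snd \<gamma> z \<le> snd \<gamma> (xrow k 0)" using g1 unfolding Feas_Opt by auto
    moreover have "xrow k 0 \<in> J" unfolding J_def using k1 by auto
    ultimately have "snd \<gamma> z \<le> 0" using jmin[of "xrow k 0" "xrow k 0"] v JF \<open>\<forall>j\<in>J. c j = 0\<close>
      by (auto simp: zero_ereal_def)
    then have "c z \<le> 0" using v[OF zF] by (simp add: zero_ereal_def)
    then show "c z = 0" using \<open>\<forall>i\<in>F. c i \<ge> 0\<close> zF by (meson order.antisym)
  qed
  have ex: "\<exists>w. (\<forall>c\<in>C. (\<Sum>i\<in>F. w i * c i) \<le> 0) \<and> w (GG k f) > 0 \<and> (\<forall>i\<in>F-J. w i \<ge> 0)"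
  proof (rule sep_lemma[of F "GG k f" J C])
    show "finite F" by (fact finF)
    show "GG k f \<in> F" by (fact aF)
    show "GG k f \<notin> J" by (fact aJ)
    show "J \<subseteq> F" by (fact JF)
    show "closed C" by (fact clo)
    show "(\<lambda>i. 0) \<in> C" by (fact zero)
    show "\<And>c i. c \<in> C \<Longrightarrow> i \<notin> F \<Longrightarrow> c i = 0" by (rule supp)
    show "\<And>c d. c \<in> C \<Longrightarrow> d \<in> C \<Longrightarrow> (\<lambda>i. c i + d i) \<in> C" by (rule add)
    show "\<And>c t. c \<in> C \<Longrightarrow> 0 \<le> t \<Longrightarrow> (\<lambda>i. t * c i) \<in> C" by (rule scl)
    show "\<And>c. c \<in> C \<Longrightarrow> \<forall>j\<in>J. c j = 0 \<Longrightarrow> \<forall>i\<in>F. 0 \<le> c i \<Longrightarrow> \<forall>i\<in>F. c i = 0" by (rule opt)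
  qed
  obtain w where w: "\<forall>c\<in>C. (\<Sum>i\<in>F. w i * c i) \<le> 0" "w (GG k f) > 0" "\<forall>i\<in>F-J. w i \<ge> 0"
    using ex by blast
  have sumw: "(\<Sum>i\<in>F. w i) = 0"
  proof -
    have "(\<Sum>i\<in>F. w i * (if i \<in> F then r else 0)) = r * (\<Sum>i\<in>F. w i)" for r
      by (simp add: sum_distrib_left mult.commute)
    then have "r * (\<Sum>i\<in>F. w i) \<le> 0" for r using w(1) cst by metis
    from this[of 1] this[of "-1"] show ?thesis by simp
  qed
  define \<omega> where "\<omega> = (k, \<lambda>g. if g \<in> ops k \<and> GG k g \<in> F then w (GG k g) else 0)"
  have \<omega>P: "snd \<omega> g = w (GG k g)" if "g \<in> P" for g
    using that unfolding \<omega>_def F_def P_def by auto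
  have injP: "inj_on (GG k) (ops k)" by (rule inj_onI) (rule GG_inj)
  have PO: "P \<subseteq> ops k" unfolding P_def by blast
  have wsP: "wsupp \<omega> \<subseteq> P"
  proof
    fix g assume "g \<in> wsupp \<omega>"
    then consider "g \<in> projs k" | "g \<in> ops k" "snd \<omega> g > 0" unfolding wsupp_def \<omega>_def by auto
    then show "g \<in> P"
    proof cases
      case 1 then show ?thesis using projP unfolding projs_def by auto
    next
      case 2 then have "GG k g \<in> F" unfolding \<omega>_def by (auto split: if_splits)
      then show ?thesis using PGG 2 by blast
    qed
  qed
  have isw: "is_weighting \<omega>"
    unfolding is_weighting_def
  proof (intro conjI)
    show "1 \<le> fst \<omega>" unfolding \<omega>_def using k1 by simp
    show "\<forall>g. g \<notin> ops (fst \<omega>) \<longrightarrow> snd \<omega> g = 0" unfolding \<omega>_def by simp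
    have "(\<Sum>g\<in>ops k. snd \<omega> g) = (\<Sum>g\<in>ops k. if g \<in> P then w (GG k g) else 0)"
      by (rule sum.cong) (use PGG \<omega>P in \<open>auto simp: \<omega>_def F_def\<close>)
    also have "\<dots> = (\<Sum>g\<in>ops k \<inter> P. w (GG k g))" by (rule sum.inter_restrict[symmetric]) (rule ops_finite)
    also have "ops k \<inter> P = P" using PO by blast
    also have "(\<Sum>g\<in>P. w (GG k g)) = (\<Sum>z\<in>F. w z)"
      unfolding F_def using sum.reindex[OF inj_on_subset[OF injP PO], of w] by simp
    finally show "(\<Sum>g\<in>ops (fst \<omega>). snd \<omega> g) = 0" using sumw unfolding \<omega>_def by simp
    show "\<forall>g\<in>ops (fst \<omega>). snd \<omega> g < 0 \<longrightarrow> g \<in> projs (fst \<omega>)"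
    proof (intro ballI impI)
      fix g assume g: "g \<in> ops (fst \<omega>)" "snd \<omega> g < 0"
      then have gk: "g \<in> ops k" "GG k g \<in> F" "w (GG k g) < 0" unfolding \<omega>_def by (auto split: if_splits)
      then have "GG k g \<in> J" using w(3) by force
      then obtain i where i: "i < k" "GG k g = xrow k i" unfolding J_def by auto
      then have "g = proj k i" "i < k" using xrow_GG_proj[OF i(2) gk(1)] by auto
      then show "g \<in> projs (fst \<omega>)" unfolding \<omega>_def projs_def by auto
    qed
  qed
  have wpol: "is_wpol \<omega> \<gamma>" if g: "\<gamma> \<in> \<Gamma>" for \<gamma>
    unfolding is_wpol_def
  proof (intro conjI ballI allI impI)
    show "is_weighting \<omega>" by (rule isw)
    fix g assume "g \<in> wsupp \<omega>"
    then show "is_pol g \<gamma>" using wsP g unfolding P_def Pol_def by blast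
  next
    fix ys assume ys: "length ys = fst \<omega> \<and> set ys \<subseteq> Feas \<gamma>"
    then have ys1: "length ys = k" "set ys \<subseteq> Feas \<gamma>" unfolding \<omega>_def by auto
    obtain \<gamma>' where g': "\<gamma>' \<in> \<Gamma>" "fst \<gamma>' = length (CL k)" "\<forall>g. snd \<gamma>' (GG k g) = snd \<gamma> (app_op g (fst \<gamma>) ys)"
      using transfer[OF g ys1] by blast
    have Fg': "F \<subseteq> Feas \<gamma>'" unfolding F_def P_def by (rule transfer_Feas[OF g ys1 g'(2) g'(3)])
    have e: "fst Z0 = fst \<gamma>'" using Z0 g' unfolding M_def by simp
    define \<gamma>'' where "\<gamma>'' = add2 \<gamma>' Z0"
    have g''S: "\<gamma>'' \<in> S" unfolding S_def \<gamma>''_def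
      using add2_in[OF g'(1) Z0(1) e] add2_fst[of \<gamma>' Z0] Feas_add2[OF g'(1) Z0(1) e] g' Z0 Fg'
      unfolding M_def by auto
    define c where "c = wcoords F \<gamma>''"
    have cC: "c \<in> C" unfolding c_def C_def using g''S by blast
    have cval: "c (GG k g) = real_of_ereal (snd \<gamma> (app_op g (fst \<gamma>) ys))" if "g \<in> P" for g
    proof -
      have GF: "GG k g \<in> F" unfolding F_def using that by blast
      have "snd \<gamma>'' (GG k g) = snd \<gamma>' (GG k g) + snd Z0 (GG k g)"
        unfolding \<gamma>''_def using add2_val[OF e] GG_len g'(2) by metis
      also have "\<dots> = snd \<gamma> (app_op g (fst \<gamma>) ys)" using Z0v[OF GF] g'(3)[rule_format, of g] by simp
      finally show ?thesis unfolding c_def wcoords_def using GF by simp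
    qed
    have "(\<Sum>g\<in>wsupp \<omega>. snd \<omega> g * real_of_ereal (snd \<gamma> (app_op g (fst \<gamma>) ys)))
        = (\<Sum>g\<in>wsupp \<omega>. w (GG k g) * c (GG k g))"
      by (rule sum.cong) (use wsP \<omega>P cval in auto)
    also have "\<dots> = (\<Sum>z\<in>GG k ` wsupp \<omega>. w z * c z)"
      using sum.reindex[OF inj_on_subset[OF injP], of "wsupp \<omega>" "\<lambda>z. w z * c z"] wsP PO by auto
    also have "\<dots> = (\<Sum>z\<in>F. w z * c z)"
    proof (rule sum.mono_neutral_left[OF finF])
      show "GG k ` wsupp \<omega> \<subseteq> F" using wsP unfolding F_def by blast
      show "\<forall>z\<in>F - GG k ` wsupp \<omega>. w z * c z = 0"
      proof
        fix z assume z: "z \<in> F - GG k ` wsupp \<omega>"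
        then obtain g where gP: "g \<in> P" "z = GG k g" unfolding F_def by blast
        have gn: "g \<notin> wsupp \<omega>" using z gP by blast
        have "z \<notin> J"
        proof
          assume "z \<in> J"
          then obtain i where i: "i < k" "z = xrow k i" unfolding J_def by auto
          then have e: "GG k g = xrow k i" using gP by simp
          have "g \<in> ops k" using gP(1) PO by blast
          then have "g = proj k i" using xrow_GG_proj[OF e] by blast
          then have "g \<in> wsupp \<omega>" using i unfolding wsupp_def projs_def \<omega>_def by auto
          then show False using gn by blast
        qed
        then have "w z \<ge> 0" using w(3) z by blast
        moreover have "\<not> snd \<omega> g > 0" using gn gP PO unfolding wsupp_def \<omega>_def by auto
        then have "w z \<le> 0" using \<omega>P[OF gP(1)] gP by simp
        ultimately show "w z * c z = 0" by simp
      qed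
    qed
    also have "\<dots> \<le> 0" using w(1) cC by blast
    finally show "(\<Sum>g\<in>wsupp \<omega>. snd \<omega> g * real_of_ereal (snd \<gamma> (app_op g (fst \<gamma>) ys))) \<le> 0" .
  qed
  have "\<omega> \<in> wPol \<Gamma>" unfolding wPol_def using isw wpol by blast
  moreover have "f \<in> wsupp \<omega>" unfolding wsupp_def using fops aF w(2) \<omega>P[of f]
    unfolding \<omega>_def by auto
  ultimately show ?thesis by blast
qed

end

theorem corollary1:
  fixes \<Gamma> :: "('d::finite) wrel set"
  assumes "CARD('d) \<ge> 2"
    and "weighted_relational_clone \<Gamma>"
  shows "supp_set (wPol \<Gamma>) = Pol \<Gamma>"
proof
  show "supp_set (wPol \<Gamma>) \<subseteq> Pol \<Gamma>" by (rule supp_sub)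
  interpret wclone \<Gamma> using assms(2) by unfold_locales
  show "Pol \<Gamma> \<subseteq> supp_set (wPol \<Gamma>)"
  proof
    fix f assume f: "f \<in> Pol \<Gamma>"
    show "f \<in> supp_set (wPol \<Gamma>)"
    proof (cases "f \<in> all_projs")
      case True then show ?thesis unfolding supp_set_def by blast
    next
      case False
      then obtain \<omega> where "\<omega> \<in> wPol \<Gamma>" "f \<in> wsupp \<omega>" using main[OF f] by blast
      then show ?thesis unfolding supp_set_def by blast
    qed
  qed
qed

end
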